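(* The sequent calculi $\mathbf{GCE}$, $\mathbf{GCM}$, $\mathbf{GCEN}$, $\mathbf{GCMN}$, $\mathbf{GCMC}$, $\mathbf{GCK}$ are sound and complete for the logics $\mathsf{CE}$, $\mathsf{CM}$, $\mathsf{CEN}$, $\mathsf{CMN}$, $\mathsf{CMC}$, $\mathsf{CK}$ respectively: for every formula $\phi$ of $\mathcal{L}_\triangleright$, the sequent $\Rightarrow\phi$ is derivable in the calculus iff $\phi$ belongs to the corresponding logic.
   Context: Formulas of $\mathcal{L}_\triangleright$ are built from atoms and $\bot$ with $\wedge,\vee,\to$ and binary $\triangleright$; $\top:=\bot\to\bot$. $\mathsf{CE}$ is the smallest set of $\mathcal{L}_\triangleright$-formulas containing all instances of classical tautologies and closed under modus ponens and the rule: from $\phi_0\leftrightarrow\phi_1$ and $\psi_0\leftrightarrow\psi_1$ infer $(\phi_0\triangleright\psi_0)\to(\phi_1\triangleright\psi_1)$. Axiom schemes: (CM) $(\phi\triangleright\psi\wedge\theta)\to(\phi\triangleright\psi)\wedge(\phi\triangleright\theta)$; (CC) $(\phi\triangleright\psi)\wedge(\phi\triangleright\theta)\to(\phi\triangleright\psi\wedge\theta)$; (CN) $\phi\triangleright\top$. $\mathsf{CEN}=\mathsf{CE}+(CN)$, $\mathsf{CM}=\mathsf{CE}+(CM)$, $\mathsf{CMN}=\mathsf{CM}+(CN)$, $\mathsf{CMC}=\mathsf{CM}+(CC)$, $\mathsf{CK}=\mathsf{CMC}+(CN)$ (adding all instances of the schemes as axioms). Sequents are $\Gamma\Rightarrow\Delta$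 with $\Gamma,\Delta$ finite multisets of formulas. $\mathbf{G3cp}$ has axioms $\Gamma,p\Rightarrow p,\Delta$ ($p$ atomic) and $\Gamma,\bot\Rightarrow\Delta$, and rules: $(L\wedge)$ from $\Gamma,\phi,\psi\Rightarrow\Delta$ infer $\Gamma,\phi\wedge\psi\Rightarrow\Delta$; $(R\wedge)$ from $\Gamma\Rightarrow\phi,\Delta$ and $\Gamma\Rightarrow\psi,\Delta$ infer $\Gamma\Rightarrow\phi\wedge\psi,\Delta$; $(L\vee)$ from $\Gamma,\phi\Rightarrow\Delta$ and $\Gamma,\psi\Rightarrow\Delta$ infer $\Gamma,\phi\vee\psi\Rightarrow\Delta$; $(R\vee)$ from $\Gamma\Rightarrow\phi,\psi,\Delta$ infer $\Gamma\Rightarrow\phi\vee\psi,\Delta$; $(L\to)$ from $\Gamma\Rightarrow\phi,\Delta$ and $\Gamma,\psi\Rightarrow\Delta$ infer $\Gamma,\phi\to\psi\Rightarrow\Delta$; $(R\to)$ from $\Gamma,\phi\Rightarrow\psi,\Delta$ infer $\Gamma\Rightarrow\phi\to\psi,\Delta$. $\mathbf{G3W}$ is $\mathbf{G3cp}$ plus weakening: from $\Gamma\Rightarrow\Delta$ infer $\Gamma,\phi\Rightarrow\Delta$, resp. $\Gamma\Rightarrow\phi,\Delta$. "$\alpha\Leftrightarrow\beta$" as a premise abbreviates the two premises $\alpha\Rightarrow\beta$, $\beta\Rightarrow\alpha$. Conditional rules: $(CE)$ from $\phi_0\Leftrightarrow\phi_1$ and $\psi_0\Leftrightarrow\psi_1$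 infer $\phi_1\triangleright\psi_1\Rightarrow\phi_0\triangleright\psi_0$; $(CM)$ from $\phi_0\Leftrightarrow\phi_1$ and $\psi_1\Rightarrow\psi_0$ infer $\phi_1\triangleright\psi_1\Rightarrow\phi_0\triangleright\psi_0$; $(CMC)$ for $n\ge1$, from $\phi_0\Leftrightarrow\phi_i$ ($1\le i\le n$) and $\psi_1,\dots,\psi_n\Rightarrow\psi_0$ infer $\phi_1\triangleright\psi_1,\dots,\phi_n\triangleright\psi_n\Rightarrow\phi_0\triangleright\psi_0$; $(CN)$ from $\Rightarrow\psi_0$ infer $\Rightarrow\phi_0\triangleright\psi_0$. $\mathbf{GCE},\mathbf{GCM},\mathbf{GCMC}$ are $\mathbf{G3W}$ plus $(CE)$, $(CM)$, $(CMC)$; $\mathbf{GCEN},\mathbf{GCMN},\mathbf{GCK}$ are these plus $(CN)$. The cut rule is not part of the calculi. *)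

theory Defs
  imports Main "HOL-Library.Multiset"
begin

datatype 'a form =
    Atom 'a
  | Bot
  | And "'a form" "'a form"
  | Or "'a form" "'a form"
  | Imp "'a form" "'a form"
  | Cond "'a form" "'a form"

definition Top :: "'a form" where "Top = Imp Bot Bot"

definition Iff :: "'a form \<Rightarrow> 'a form \<Rightarrow> 'a form" where
  "Iff a b = And (Imp a b) (Imp b a)"

fun cond_free :: "'a form \<Rightarrow> bool" where
  "cond_free (Atom p) = True"
| "cond_free Bot = True"
| "cond_free (And a b) = (cond_free a \<and> cond_free b)"
| "cond_free (Or a b) = (cond_free a \<and> cond_free b)"
| "cond_free (Imp a b) = (cond_free a \<and> cond_free b)"
| "cond_free (Cond a b) = False"

fun peval :: "('a \<Rightarrow> bool) \<Rightarrow> 'a form \<Rightarrow> bool" where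
  "peval v (Atom p) = v p"
| "peval v Bot = False"
| "peval v (And a b) = (peval v a \<and> peval v b)"
| "peval v (Or a b) = (peval v a \<or> peval v b)"
| "peval v (Imp a b) = (peval v a \<longrightarrow> peval v b)"
| "peval v (Cond a b) = False"

definition ptaut :: "nat form \<Rightarrow> bool" where
  "ptaut \<psi> \<longleftrightarrow> cond_free \<psi> \<and> (\<forall>v. peval v \<psi>)"

fun subst :: "(nat \<Rightarrow> 'a form) \<Rightarrow> nat form \<Rightarrow> 'a form" where
  "subst \<sigma> (Atom p) = \<sigma> p"
| "subst \<sigma> Bot = Bot"
| "subst \<sigma> (And a b) = And (subst \<sigma> a) (subst \<sigma> b)"
| "subst \<sigma> (Or a b) = Or (subst \<sigma> a) (subst \<sigma> b)"
| "subst \<sigma> (Imp a b) = Imp (subst \<sigma> a) (subst \<sigma> b)"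
| "subst \<sigma> (Cond a b) = Cond (subst \<sigma> a) (subst \<sigma> b)"

definition taut_inst :: "'a form \<Rightarrow> bool" where
  "taut_inst \<phi> \<longleftrightarrow> (\<exists>\<psi> \<sigma>. ptaut \<psi> \<and> \<phi> = subst \<sigma> \<psi>)"

datatype sys = sCE | sCM | sCEN | sCMN | sCMC | sCK

fun hasM :: "sys \<Rightarrow> bool" where
  "hasM sCE = False" | "hasM sCM = True" | "hasM sCEN = False"
| "hasM sCMN = True" | "hasM sCMC = True" | "hasM sCK = True"

fun hasC :: "sys \<Rightarrow> bool" where
  "hasC sCE = False" | "hasC sCM = False" | "hasC sCEN = False"
| "hasC sCMN = False" | "hasC sCMC = True" | "hasC sCK = True"

fun hasN :: "sys \<Rightarrow> bool" where
  "hasN sCE = False" | "hasN sCM = False" | "hasN sCEN = True"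
| "hasN sCMN = True" | "hasN sCMC = False" | "hasN sCK = True"

inductive thm_in :: "sys \<Rightarrow> 'a form \<Rightarrow> bool" for s :: sys where
  taut: "taut_inst \<phi> \<Longrightarrow> thm_in s \<phi>"
| mp: "thm_in s (Imp \<phi> \<psi>) \<Longrightarrow> thm_in s \<phi> \<Longrightarrow> thm_in s \<psi>"
| RCE: "thm_in s (Iff \<phi>0 \<phi>1) \<Longrightarrow> thm_in s (Iff \<psi>0 \<psi>1) \<Longrightarrow>
        thm_in s (Imp (Cond \<phi>0 \<psi>0) (Cond \<phi>1 \<psi>1))"
| axCM: "hasM s \<Longrightarrow>
        thm_in s (Imp (Cond \<phi> (And \<psi> \<theta>)) (And (Cond \<phi> \<psi>) (Cond \<phi> \<theta>)))"
| axCC: "hasC s \<Longrightarrow>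
        thm_in s (Imp (And (Cond \<phi> \<psi>) (Cond \<phi> \<theta>)) (Cond \<phi> (And \<psi> \<theta>)))"
| axCN: "hasN s \<Longrightarrow> thm_in s (Cond \<phi> Top)"

definition logic :: "sys \<Rightarrow> 'a form set" where
  "logic s = {\<phi>. thm_in s \<phi>}"

datatype crule = rCE | rCM | rCMC

fun crule_of :: "sys \<Rightarrow> crule" where
  "crule_of sCE = rCE" | "crule_of sCEN = rCE"
| "crule_of sCM = rCM" | "crule_of sCMN = rCM"
| "crule_of sCMC = rCMC" | "crule_of sCK = rCMC"

inductive gder :: "sys \<Rightarrow> 'a form multiset \<Rightarrow> 'a form multiset \<Rightarrow> bool" for s :: sys where
  ax: "gder s (add_mset (Atom p) \<Gamma>) (add_mset (Atom p) \<Delta>)"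
| axBot: "gder s (add_mset Bot \<Gamma>) \<Delta>"
| LAnd: "gder s (add_mset \<phi> (add_mset \<psi> \<Gamma>)) \<Delta> \<Longrightarrow> gder s (add_mset (And \<phi> \<psi>) \<Gamma>) \<Delta>"
| RAnd: "gder s \<Gamma> (add_mset \<phi> \<Delta>) \<Longrightarrow> gder s \<Gamma> (add_mset \<psi> \<Delta>) \<Longrightarrow>
         gder s \<Gamma> (add_mset (And \<phi> \<psi>) \<Delta>)"
| LOr: "gder s (add_mset \<phi> \<Gamma>) \<Delta> \<Longrightarrow> gder s (add_mset \<psi> \<Gamma>) \<Delta> \<Longrightarrow>
        gder s (add_mset (Or \<phi> \<psi>) \<Gamma>) \<Delta>"
| ROr: "gder s \<Gamma> (add_mset \<phi> (add_mset \<psi> \<Delta>)) \<Longrightarrow> gder s \<Gamma> (add_mset (Or \<phi> \<psi>) \<Delta>)"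
| LImp: "gder s \<Gamma> (add_mset \<phi> \<Delta>) \<Longrightarrow> gder s (add_mset \<psi> \<Gamma>) \<Delta> \<Longrightarrow>
         gder s (add_mset (Imp \<phi> \<psi>) \<Gamma>) \<Delta>"
| RImp: "gder s (add_mset \<phi> \<Gamma>) (add_mset \<psi> \<Delta>) \<Longrightarrow> gder s \<Gamma> (add_mset (Imp \<phi> \<psi>) \<Delta>)"
| LW: "gder s \<Gamma> \<Delta> \<Longrightarrow> gder s (add_mset \<phi> \<Gamma>) \<Delta>"
| RW: "gder s \<Gamma> \<Delta> \<Longrightarrow> gder s \<Gamma> (add_mset \<phi> \<Delta>)"
| CE: "crule_of s = rCE \<Longrightarrow>
       gder s {#\<phi>0#} {#\<phi>1#} \<Longrightarrow> gder s {#\<phi>1#} {#\<phi>0#} \<Longrightarrow>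
       gder s {#\<psi>0#} {#\<psi>1#} \<Longrightarrow> gder s {#\<psi>1#} {#\<psi>0#} \<Longrightarrow>
       gder s {#Cond \<phi>1 \<psi>1#} {#Cond \<phi>0 \<psi>0#}"
| CM: "crule_of s = rCM \<Longrightarrow>
       gder s {#\<phi>0#} {#\<phi>1#} \<Longrightarrow> gder s {#\<phi>1#} {#\<phi>0#} \<Longrightarrow>
       gder s {#\<psi>1#} {#\<psi>0#} \<Longrightarrow>
       gder s {#Cond \<phi>1 \<psi>1#} {#Cond \<phi>0 \<psi>0#}"
| CMC: "crule_of s = rCMC \<Longrightarrow> length \<phi>s = length \<psi>s \<Longrightarrow> length \<phi>s \<ge> 1 \<Longrightarrow>
        (\<forall>i < length \<phi>s. gder s {#\<phi>0#} {#\<phi>s ! i#} \<and> gder s {#\<phi>s ! i#} {#\<phi>0#}) \<Longrightarrow>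
        gder s (mset \<psi>s) {#\<psi>0#} \<Longrightarrow>
        gder s (mset (map2 Cond \<phi>s \<psi>s)) {#Cond \<phi>0 \<psi>0#}"
| CN: "hasN s \<Longrightarrow> gder s {#} {#\<psi>0#} \<Longrightarrow> gder s {#} {#Cond \<phi>0 \<psi>0#}"

end

theory Submission
  imports Defs
begin


fun bval :: "('a form \<Rightarrow> bool) \<Rightarrow> 'a form \<Rightarrow> bool" where
  "bval V (Atom p) = V (Atom p)"
| "bval V Bot = False"
| "bval V (And a b) = (bval V a \<and> bval V b)"
| "bval V (Or a b) = (bval V a \<or> bval V b)"
| "bval V (Imp a b) = (bval V a \<longrightarrow> bval V b)"
| "bval V (Cond a b) = V (Cond a b)"

definition good :: "sys \<Rightarrow> ('a form \<Rightarrow> bool) \<Rightarrow> bool" where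
"good s V \<longleftrightarrow>
 (\<forall>a0 a1 b0 b1. crule_of s = rCE \<longrightarrow> gder s {#a0#} {#a1#} \<longrightarrow> gder s {#a1#} {#a0#}
    \<longrightarrow> gder s {#b0#} {#b1#} \<longrightarrow> gder s {#b1#} {#b0#} \<longrightarrow> V (Cond a1 b1) \<longrightarrow> V (Cond a0 b0)) \<and>
 (\<forall>a0 a1 b0 b1. crule_of s = rCM \<longrightarrow> gder s {#a0#} {#a1#} \<longrightarrow> gder s {#a1#} {#a0#}
    \<longrightarrow> gder s {#b1#} {#b0#} \<longrightarrow> V (Cond a1 b1) \<longrightarrow> V (Cond a0 b0)) \<and>
 (\<forall>as bs a0 b0. crule_of s = rCMC \<longrightarrow> length as = length bs \<longrightarrow> as \<noteq> [] \<longrightarrow>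
    (\<forall>i<length as. gder s {#a0#} {#as!i#} \<and> gder s {#as!i#} {#a0#}) \<longrightarrow>
    gder s (mset bs) {#b0#} \<longrightarrow> (\<forall>i<length as. V (Cond (as!i) (bs!i))) \<longrightarrow> V (Cond a0 b0)) \<and>
 (\<forall>a b. hasN s \<longrightarrow> gder s {#} {#b#} \<longrightarrow> V (Cond a b))"

definition valid :: "sys \<Rightarrow> 'a form multiset \<Rightarrow> 'a form multiset \<Rightarrow> bool" where
"valid s \<Gamma> \<Delta> \<longleftrightarrow> (\<forall>V. good s V \<longrightarrow> (\<forall>x\<in>#\<Gamma>. bval V x) \<longrightarrow> (\<exists>y\<in>#\<Delta>. bval V y))"

lemma map2_nth_mem: "length xs = length ys \<Longrightarrow> i < length xs \<Longrightarrow> Cond (xs!i) (ys!i) \<in> set (map2 Cond xs ys)"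
  by (metis (no_types, lifting) case_prod_conv length_map length_zip min.idem nth_map nth_mem nth_zip)

lemma gder_valid: "gder s \<Gamma> \<Delta> \<Longrightarrow> valid s \<Gamma> \<Delta>"
proof (induction rule: gder.induct)
  case (CE \<phi>0 \<phi>1 \<psi>0 \<psi>1)
  then show ?case unfolding valid_def good_def by auto
next
  case (CM \<phi>0 \<phi>1 \<psi>1 \<psi>0)
  then show ?case unfolding valid_def good_def by auto
next
  case (CMC \<phi>s \<psi>s \<phi>0 \<psi>0)
  show ?case unfolding valid_def
  proof (intro allI impI)
    fix V :: "'a form \<Rightarrow> bool" assume g: "good s V" and h: "\<forall>x\<in>#mset (map2 Cond \<phi>s \<psi>s). bval V x"
    have "\<forall>i<length \<phi>s. V (Cond (\<phi>s!i) (\<psi>s!i))"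
      using h map2_nth_mem[OF CMC(2)] by fastforce
    moreover have "\<phi>s \<noteq> []" using CMC(3) by auto
    ultimately have "V (Cond \<phi>0 \<psi>0)" using g CMC(1,2,4,5) unfolding good_def by blast
    then show "\<exists>y\<in>#{#Cond \<phi>0 \<psi>0#}. bval V y" by simp
  qed
next
  case (CN \<psi>0 \<phi>0)
  then show ?case unfolding valid_def good_def by auto
qed (auto simp: valid_def)



lemma gder_weak: "gder s \<Gamma> \<Delta> \<Longrightarrow> \<Gamma> \<subseteq># \<Gamma>' \<Longrightarrow> \<Delta> \<subseteq># \<Delta>' \<Longrightarrow> gder s \<Gamma>' \<Delta>'"
proof -
  assume d: "gder s \<Gamma> \<Delta>" and a: "\<Gamma> \<subseteq># \<Gamma>'" and b: "\<Delta> \<subseteq># \<Delta>'"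
  have l: "gder s (\<Gamma> + X) \<Delta>" for X
    by (induction X) (auto simp: d intro: gder.LW)
  have r: "gder s (\<Gamma> + X) (\<Delta> + Y)" for X Y
    by (induction Y) (auto simp: l intro: gder.RW)
  obtain X where "\<Gamma>' = \<Gamma> + X" using a by (metis subset_mset.add_diff_inverse)
  moreover obtain Y where "\<Delta>' = \<Delta> + Y" using b by (metis subset_mset.add_diff_inverse)
  ultimately show ?thesis using r by simp
qed

fun fsz :: "'a form \<Rightarrow> nat" where
  "fsz (Atom p) = 1" | "fsz Bot = 1"
| "fsz (And a b) = fsz a + fsz b + 1"
| "fsz (Or a b) = fsz a + fsz b + 1"
| "fsz (Imp a b) = fsz a + fsz b + 1"
| "fsz (Cond a b) = fsz a + fsz b + 1"

definition meas :: "'a form multiset \<Rightarrow> 'a form multiset \<Rightarrow> nat" where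
  "meas \<Gamma> \<Delta> = sum_mset (image_mset fsz \<Gamma>) + sum_mset (image_mset fsz \<Delta>)"

lemma sum_fsz_mono: "A \<subseteq># B \<Longrightarrow> sum_mset (image_mset (f::_\<Rightarrow>nat) A) \<le> sum_mset (image_mset f B)"
  by (metis image_mset_subseteq_mono le_add1 subset_mset.add_diff_inverse sum_mset.union)

lemma fsz_le: "x \<in># A \<Longrightarrow> fsz x \<le> sum_mset (image_mset fsz A)"
  using sum_fsz_mono[of "{#x#}" A fsz] by simp

lemma distinct_mset_sub: "distinct xs \<Longrightarrow> set xs \<subseteq> set_mset M \<Longrightarrow> mset xs \<subseteq># M"
proof (induction xs arbitrary: M)
  case Nil then show ?case by simp
next
  case (Cons x xs)
  then obtain M' where M: "M = add_mset x M'" by (metis insert_subset multi_member_split set_simps(2))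
  have "set xs \<subseteq> set_mset M'" using Cons(2,3) M by auto
  then show ?case using Cons M by auto
qed



definition Vc :: "sys \<Rightarrow> 'a form multiset \<Rightarrow> 'a form \<Rightarrow> bool" where
"Vc s \<Gamma> X = (case X of Atom p \<Rightarrow> Atom p \<in># \<Gamma>
   | Cond a b \<Rightarrow> (\<exists>L. (L \<noteq> [] \<or> hasN s) \<and> (crule_of s \<noteq> rCMC \<longrightarrow> length L \<le> 1) \<and>
        (\<forall>(a',b')\<in>set L. Cond a' b' \<in># \<Gamma> \<and> valid s {#a#} {#a'#} \<and> valid s {#a'#} {#a#} \<and>
            (crule_of s = rCE \<longrightarrow> valid s {#b#} {#b'#})) \<and> valid s (mset (map snd L)) {#b#})
   | _ \<Rightarrow> False)"

lemma vt: "valid s {#a#} {#b#} \<Longrightarrow> valid s {#b#} {#c#} \<Longrightarrow> valid s {#a#} {#c#}"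
  unfolding valid_def by auto

lemma vt_list: "valid s (mset bs) {#b#} \<Longrightarrow> valid s {#b#} {#c#} \<Longrightarrow> valid s (mset bs) {#c#}"
  unfolding valid_def by auto

lemma valid_refl: "valid s {#a#} {#a#}"
  unfolding valid_def by auto

lemma valid_set: "set xs = set ys \<Longrightarrow> valid s (mset xs) D = valid s (mset ys) D"
  unfolding valid_def by auto

lemma valid_concat: "valid s (mset bs) {#b0#} \<Longrightarrow> (\<forall>i<length bs. valid s (mset (Bs i)) {#bs!i#})
  \<Longrightarrow> valid s (mset (concat (map Bs [0..<length bs]))) {#b0#}"
  unfolding valid_def
proof (intro allI impI)
  fix V :: "'a form \<Rightarrow> bool"
  assume h1: "\<forall>V. good s V \<longrightarrow> (\<forall>x\<in>#mset bs. bval V x) \<longrightarrow> (\<exists>y\<in>#{#b0#}. bval V y)"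
    and h2: "\<forall>i<length bs. \<forall>V. good s V \<longrightarrow> (\<forall>x\<in>#mset (Bs i). bval V x) \<longrightarrow> (\<exists>y\<in>#{#bs ! i#}. bval V y)"
    and g: "good s V" and h: "\<forall>x\<in>#mset (concat (map Bs [0..<length bs])). bval V x"
  have "\<forall>i<length bs. bval V (bs!i)"
  proof (intro allI impI)
    fix i assume i: "i < length bs"
    have "\<forall>x\<in>#mset (Bs i). bval V x" using h i by auto
    then show "bval V (bs!i)" using h2 i g by auto
  qed
  then have "\<forall>x\<in>#mset bs. bval V x" by (metis in_set_conv_nth set_mset_mset)
  then show "\<exists>y\<in>#{#b0#}. bval V y" using h1 g by blast
qed

lemma choice_lt: "(\<forall>i<(n::nat). \<exists>L. P i L) \<Longrightarrow> \<exists>f. \<forall>i<n. P i (f i)"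
  by metis

lemma Vc_good: "good s (Vc s \<Gamma>)"
proof -
  have p1: "\<forall>a0 a1 b0 b1. crule_of s = rCE \<longrightarrow> gder s {#a0#} {#a1#} \<longrightarrow> gder s {#a1#} {#a0#}
    \<longrightarrow> gder s {#b0#} {#b1#} \<longrightarrow> gder s {#b1#} {#b0#} \<longrightarrow> Vc s \<Gamma> (Cond a1 b1) \<longrightarrow> Vc s \<Gamma> (Cond a0 b0)"
  proof (intro allI impI)
    fix a0 a1 b0 b1
    assume r: "crule_of s = rCE" and g1: "gder s {#a0#} {#a1#}" and g2: "gder s {#a1#} {#a0#}"
      and g3: "gder s {#b0#} {#b1#}" and g4: "gder s {#b1#} {#b0#}" and v: "Vc s \<Gamma> (Cond a1 b1)"
    note w = gder_valid[OF g1] gder_valid[OF g2] gder_valid[OF g3] gder_valid[OF g4]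
    from v obtain L where L: "(L \<noteq> [] \<or> hasN s)" "length L \<le> 1"
      "\<forall>(a',b')\<in>set L. Cond a' b' \<in># \<Gamma> \<and> valid s {#a1#} {#a'#} \<and> valid s {#a'#} {#a1#} \<and>
            (crule_of s = rCE \<longrightarrow> valid s {#b1#} {#b'#})" "valid s (mset (map snd L)) {#b1#}"
      unfolding Vc_def using r by auto
    show "Vc s \<Gamma> (Cond a0 b0)"
    proof (cases L)
      case Nil
      have "valid s {#} {#b0#}" using L Nil vt_list[OF _ w(4), of "[]"] by simp
      then show ?thesis unfolding Vc_def apply simp apply (rule exI[of _ "[]"]) using L Nil by simp
    next
      case (Cons p L')
      then have LL: "L = [p]" using L(2) by auto
      obtain a' b' where p: "p = (a',b')" by fastforce
      have q: "Cond a' b' \<in># \<Gamma>" "valid s {#a1#} {#a'#}" "valid s {#a'#} {#a1#}" "valid s {#b1#} {#b'#}"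
        "valid s {#b'#} {#b1#}"
        using L(3,4) LL p r by auto
      have q2: "valid s {#a0#} {#a'#}" "valid s {#a'#} {#a0#}" "valid s {#b0#} {#b'#}" "valid s {#b'#} {#b0#}"
        using vt[OF w(1) q(2)] vt[OF q(3) w(2)] vt[OF w(3) q(4)] vt[OF q(5) w(4)] by auto
      show ?thesis unfolding Vc_def
        apply simp
        apply (rule exI[of _ L])
        using LL p q q2 r by simp
    qed
  qed
  have p2: "\<forall>a0 a1 b0 b1. crule_of s = rCM \<longrightarrow> gder s {#a0#} {#a1#} \<longrightarrow> gder s {#a1#} {#a0#}
    \<longrightarrow> gder s {#b1#} {#b0#} \<longrightarrow> Vc s \<Gamma> (Cond a1 b1) \<longrightarrow> Vc s \<Gamma> (Cond a0 b0)"
  proof (intro allI impI)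
    fix a0 a1 b0 b1
    assume r: "crule_of s = rCM" and g1: "gder s {#a0#} {#a1#}" and g2: "gder s {#a1#} {#a0#}"
      and g4: "gder s {#b1#} {#b0#}" and v: "Vc s \<Gamma> (Cond a1 b1)"
    note w = gder_valid[OF g1] gder_valid[OF g2] gder_valid[OF g4]
    from v obtain L where L: "(L \<noteq> [] \<or> hasN s)" "length L \<le> 1"
      "\<forall>(a',b')\<in>set L. Cond a' b' \<in># \<Gamma> \<and> valid s {#a1#} {#a'#} \<and> valid s {#a'#} {#a1#}"
      "valid s (mset (map snd L)) {#b1#}"
      unfolding Vc_def using r by auto
    show "Vc s \<Gamma> (Cond a0 b0)"
    proof (cases L)
      case Nil
      have "valid s {#} {#b0#}" using L Nil vt_list[OF _ w(3), of "[]"] by simp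
      then show ?thesis unfolding Vc_def apply simp apply (rule exI[of _ "[]"]) using L Nil by simp
    next
      case (Cons p L')
      then have LL: "L = [p]" using L(2) by auto
      obtain a' b' where p: "p = (a',b')" by fastforce
      have q: "Cond a' b' \<in># \<Gamma>" "valid s {#a1#} {#a'#}" "valid s {#a'#} {#a1#}"
        "valid s {#b'#} {#b1#}"
        using L(3,4) LL p r by auto
      have q2: "valid s {#a0#} {#a'#}" "valid s {#a'#} {#a0#}" "valid s {#b'#} {#b0#}"
        using vt[OF w(1) q(2)] vt[OF q(3) w(2)] vt[OF q(4) w(3)] by auto
      show ?thesis unfolding Vc_def
        apply simp
        apply (rule exI[of _ L])
        using LL p q q2 r by simp
    qed
  qed
  have p3: "\<forall>as bs a0 b0. crule_of s = rCMC \<longrightarrow> length as = length bs \<longrightarrow> as \<noteq> [] \<longrightarrow>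
    (\<forall>i<length as. gder s {#a0#} {#as!i#} \<and> gder s {#as!i#} {#a0#}) \<longrightarrow>
    gder s (mset bs) {#b0#} \<longrightarrow> (\<forall>i<length as. Vc s \<Gamma> (Cond (as!i) (bs!i))) \<longrightarrow> Vc s \<Gamma> (Cond a0 b0)"
  proof (intro allI impI)
    fix as bs a0 b0
    assume r: "crule_of s = rCMC" and len: "length as = length bs" and ne: "as \<noteq> []"
      and ga: "\<forall>i<length as. gder s {#a0#} {#as!i#} \<and> gder s {#as!i#} {#a0#}"
      and gb: "gder s (mset bs) {#b0#}" and v: "\<forall>i<length as. Vc s \<Gamma> (Cond (as!i) (bs!i))"
    have "\<forall>i<length as. \<exists>L. (L \<noteq> [] \<or> hasN s) \<and>
        (\<forall>(a',b')\<in>set L. Cond a' b' \<in># \<Gamma> \<and> valid s {#as!i#} {#a'#} \<and> valid s {#a'#} {#as!i#}) \<and>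
        valid s (mset (map snd L)) {#bs!i#}"
    proof (intro allI impI)
      fix i assume i: "i < length as"
      then have "Vc s \<Gamma> (Cond (as!i) (bs!i))" using v by blast
      then show "\<exists>L. (L \<noteq> [] \<or> hasN s) \<and>
        (\<forall>(a',b')\<in>set L. Cond a' b' \<in># \<Gamma> \<and> valid s {#as!i#} {#a'#} \<and> valid s {#a'#} {#as!i#}) \<and>
        valid s (mset (map snd L)) {#bs!i#}" unfolding Vc_def by (simp add: r)
    qed
    then have "\<exists>f. \<forall>i<length as. (f i \<noteq> [] \<or> hasN s) \<and>
        (\<forall>(a',b')\<in>set (f i). Cond a' b' \<in># \<Gamma> \<and> valid s {#as!i#} {#a'#} \<and> valid s {#a'#} {#as!i#}) \<and>
        valid s (mset (map snd (f i))) {#bs!i#}"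
      by (rule choice_lt)
    then obtain f where f: "\<forall>i<length as. (f i \<noteq> [] \<or> hasN s) \<and>
        (\<forall>(a',b')\<in>set (f i). Cond a' b' \<in># \<Gamma> \<and> valid s {#as!i#} {#a'#} \<and> valid s {#a'#} {#as!i#}) \<and>
        valid s (mset (map snd (f i))) {#bs!i#}"
      by (elim exE)
    define L where "L = concat (map f [0..<length bs])"
    have c1: "L \<noteq> [] \<or> hasN s"
    proof (cases "hasN s")
      case False
      then have "f 0 \<noteq> []" using f ne by auto
      moreover have "f 0 \<in> set (map f [0..<length bs])" proof - have "0 < length bs" using ne len by auto then show ?thesis by (metis atLeastLessThan_iff image_eqI le0 set_map set_upt) qed
      ultimately show ?thesis unfolding L_def by auto
    qed simp
    have c2: "\<forall>(a',b')\<in>set L. Cond a' b' \<in># \<Gamma> \<and> valid s {#a0#} {#a'#} \<and> valid s {#a'#} {#a0#}"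
    proof
      fix x assume "x \<in> set L"
      then obtain i where i: "i < length as" and x: "x \<in> set (f i)" unfolding L_def using len by auto
      obtain a' b' where xp: "x = (a',b')" by fastforce
      have fi: "\<forall>(a',b')\<in>set (f i). Cond a' b' \<in># \<Gamma> \<and> valid s {#as!i#} {#a'#} \<and> valid s {#a'#} {#as!i#}"
        using f i by blast
      have q: "Cond a' b' \<in># \<Gamma>" "valid s {#as!i#} {#a'#}" "valid s {#a'#} {#as!i#}"
        using fi x xp by auto
      have q2: "valid s {#a0#} {#as!i#}" "valid s {#as!i#} {#a0#}" using ga i gder_valid by blast+
      have "Cond a' b' \<in># \<Gamma> \<and> valid s {#a0#} {#a'#} \<and> valid s {#a'#} {#a0#}"
        using q vt[OF q2(1) q(2)] vt[OF q(3) q2(2)] by blast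
      then show "case x of (a', b') \<Rightarrow> Cond a' b' \<in># \<Gamma> \<and> valid s {#a0#} {#a'#} \<and> valid s {#a'#} {#a0#}"
        using xp by simp
    qed
    have fb: "\<forall>i<length bs. valid s (mset (map snd (f i))) {#bs!i#}" using f len by simp
    have "valid s (mset (concat (map (\<lambda>i. map snd (f i)) [0..<length bs]))) {#b0#}"
      using valid_concat[OF gder_valid[OF gb] fb] .
    moreover have "map snd L = concat (map (\<lambda>i. map snd (f i)) [0..<length bs])"
      unfolding L_def by (simp add: map_concat comp_def)
    ultimately have c3: "valid s (mset (map snd L)) {#b0#}" by simp
    have c2': "\<forall>(a',b')\<in>set L. Cond a' b' \<in># \<Gamma> \<and> valid s {#a0#} {#a'#} \<and> valid s {#a'#} {#a0#} \<and>
            (crule_of s = rCE \<longrightarrow> valid s {#b0#} {#b'#})" using c2 r by auto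
    show "Vc s \<Gamma> (Cond a0 b0)" unfolding Vc_def
      apply simp
      apply (rule exI[of _ L])
      using c1 c2' c3 r by simp
  qed
  have p4: "\<forall>a b. hasN s \<longrightarrow> gder s {#} {#b#} \<longrightarrow> Vc s \<Gamma> (Cond a b)"
  proof (intro allI impI)
    fix a b :: "'a form" assume "hasN s" "gder s {#} {#b#}"
    then have "valid s {#} {#b#}" using gder_valid by blast
    then show "Vc s \<Gamma> (Cond a b)" unfolding Vc_def using \<open>hasN s\<close> apply simp apply (rule exI[of _ "[]"]) by simp

  qed
  show ?thesis unfolding good_def using p1 p2 p3 p4 by blast
qed



fun is_lit :: "'a form \<Rightarrow> bool" where
  "is_lit (Atom p) = True" | "is_lit (Cond a b) = True" | "is_lit _ = False"

lemma meas_add_l[simp]: "meas (add_mset x G) D = fsz x + meas G D" by (simp add: meas_def)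
lemma meas_add_r[simp]: "meas G (add_mset x D) = fsz x + meas G D" by (simp add: meas_def)
lemma meas_empty[simp]: "meas {#} {#} = 0" by (simp add: meas_def)

lemma sm_list: "sum_mset (image_mset f (image_mset g (mset xs))) = sum_list (map (f \<circ> g) xs)"
  by (induction xs) auto

lemma map2_Cond: "map2 Cond (map fst L) (map snd L) = map (\<lambda>(x,y). Cond x y) L"
  by (simp add: zip_map_fst_snd)

lemma complete: "valid s \<Gamma> \<Delta> \<Longrightarrow> gder s \<Gamma> \<Delta>"
proof (induction "meas \<Gamma> \<Delta>" arbitrary: \<Gamma> \<Delta> rule: less_induct)
  case less
  note IH = less.hyps
  show ?case
  proof (cases "\<exists>X\<in>#\<Gamma>. \<not> is_lit X")
    case True
    then obtain X \<Gamma>' where G: "\<Gamma> = add_mset X \<Gamma>'" and nl: "\<not> is_lit X" by (metis multi_member_split)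
    show ?thesis
    proof (cases X)
      case (Atom p) then show ?thesis using nl by simp
    next
      case Bot then show ?thesis using G gder.axBot by simp
    next
      case (And a b)
      have v: "valid s (add_mset a (add_mset b \<Gamma>')) \<Delta>" using less.prems G And unfolding valid_def by auto
      have m: "meas (add_mset a (add_mset b \<Gamma>')) \<Delta> < meas \<Gamma> \<Delta>" using G And by simp
      show ?thesis using IH[OF m v] G And gder.LAnd by simp
    next
      case (Or a b)
      have v1: "valid s (add_mset a \<Gamma>') \<Delta>" using less.prems G Or unfolding valid_def by auto
      have v2: "valid s (add_mset b \<Gamma>') \<Delta>" using less.prems G Or unfolding valid_def by auto
      have m1: "meas (add_mset a \<Gamma>') \<Delta> < meas \<Gamma> \<Delta>" using G Or by simp
      have m2: "meas (add_mset b \<Gamma>') \<Delta> < meas \<Gamma> \<Delta>" using G Or by simp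
      show ?thesis using IH[OF m1 v1] IH[OF m2 v2] G Or gder.LOr by simp
    next
      case (Imp a b)
      have v1: "valid s \<Gamma>' (add_mset a \<Delta>)" using less.prems G Imp unfolding valid_def by auto
      have v2: "valid s (add_mset b \<Gamma>') \<Delta>" using less.prems G Imp unfolding valid_def by auto
      have m1: "meas \<Gamma>' (add_mset a \<Delta>) < meas \<Gamma> \<Delta>" using G Imp by simp
      have m2: "meas (add_mset b \<Gamma>') \<Delta> < meas \<Gamma> \<Delta>" using G Imp by simp
      show ?thesis using IH[OF m1 v1] IH[OF m2 v2] G Imp gder.LImp by simp
    next
      case (Cond a b) then show ?thesis using nl by simp
    qed
  next
    case False
    then have GL: "\<forall>X\<in>#\<Gamma>. is_lit X" by blast
    show ?thesis
    proof (cases "\<exists>X\<in>#\<Delta>. \<not> is_lit X \<and> X \<noteq> Bot")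
      case True
      then obtain X \<Delta>' where D: "\<Delta> = add_mset X \<Delta>'" and nl: "\<not> is_lit X" "X \<noteq> Bot"
        by (metis multi_member_split)
      show ?thesis
      proof (cases X)
        case (Atom p) then show ?thesis using nl by simp
      next
        case Bot then show ?thesis using nl by simp
      next
        case (And a b)
        have v1: "valid s \<Gamma> (add_mset a \<Delta>')" using less.prems D And unfolding valid_def by auto
        have v2: "valid s \<Gamma> (add_mset b \<Delta>')" using less.prems D And unfolding valid_def by auto
        have m1: "meas \<Gamma> (add_mset a \<Delta>') < meas \<Gamma> \<Delta>" using D And by simp
        have m2: "meas \<Gamma> (add_mset b \<Delta>') < meas \<Gamma> \<Delta>" using D And by simp
        show ?thesis using IH[OF m1 v1] IH[OF m2 v2] D And gder.RAnd by simp
      next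
        case (Or a b)
        have v: "valid s \<Gamma> (add_mset a (add_mset b \<Delta>'))" using less.prems D Or unfolding valid_def by auto
        have m: "meas \<Gamma> (add_mset a (add_mset b \<Delta>')) < meas \<Gamma> \<Delta>" using D Or by simp
        show ?thesis using IH[OF m v] D Or gder.ROr by simp
      next
        case (Imp a b)
        have v: "valid s (add_mset a \<Gamma>) (add_mset b \<Delta>')" using less.prems D Imp unfolding valid_def by auto
        have m: "meas (add_mset a \<Gamma>) (add_mset b \<Delta>') < meas \<Gamma> \<Delta>" using D Imp by simp
        show ?thesis using IH[OF m v] D Imp gder.RImp by simp
      next
        case (Cond a b) then show ?thesis using nl by simp
      qed
    next
      case False
      then have DL: "\<forall>X\<in>#\<Delta>. is_lit X \<or> X = Bot" by blast
      define V where "V = Vc s \<Gamma>"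
      have g: "good s V" unfolding V_def by (rule Vc_good)
      have GT: "\<forall>x\<in>#\<Gamma>. bval V x"
      proof
        fix x assume x: "x \<in># \<Gamma>"
        show "bval V x"
        proof (cases x)
          case (Atom p) then show ?thesis using x by (simp add: V_def Vc_def)
        next
          case (Cond a b)
          show ?thesis unfolding Cond V_def Vc_def
            apply simp
            apply (rule exI[of _ "[(a,b)]"])
            using x Cond valid_refl[of s a] valid_refl[of s b] by simp
        qed (use x GL in auto)
      qed
      obtain y where y: "y \<in># \<Delta>" "bval V y" using less.prems g GT unfolding valid_def by blast
      have sD: "fsz y \<le> meas \<Gamma> \<Delta>" using fsz_le[OF y(1)] by (simp add: meas_def)
      show ?thesis
      proof (cases y)
        case (Atom p)
        then have "Atom p \<in># \<Gamma>" using y by (simp add: V_def Vc_def)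
        then obtain \<Gamma>' where "\<Gamma> = add_mset (Atom p) \<Gamma>'" by (metis multi_member_split)
        moreover obtain \<Delta>' where "\<Delta> = add_mset (Atom p) \<Delta>'" using y Atom by (metis multi_member_split)
        ultimately show ?thesis using gder.ax by simp
      next
        case Bot then show ?thesis using y by simp
      next
        case (And a b)
        have "is_lit y \<or> y = Bot" using DL y(1) by blast
        then show ?thesis using And by simp
      next
        case (Or a b)
        have "is_lit y \<or> y = Bot" using DL y(1) by blast
        then show ?thesis using Or by simp
      next
        case (Imp a b)
        have "is_lit y \<or> y = Bot" using DL y(1) by blast
        then show ?thesis using Imp by simp
      next
        case (Cond a b)
        from y(2) obtain L where L: "(L \<noteq> [] \<or> hasN s)" "(crule_of s \<noteq> rCMC \<longrightarrow> length L \<le> 1)"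
          "\<forall>(a',b')\<in>set L. Cond a' b' \<in># \<Gamma> \<and> valid s {#a#} {#a'#} \<and> valid s {#a'#} {#a#} \<and>
            (crule_of s = rCE \<longrightarrow> valid s {#b#} {#b'#})" "valid s (mset (map snd L)) {#b#}"
        proof -
          have "Vc s \<Gamma> (Cond a b)" using y(2) Cond V_def by simp
          then have "\<exists>L. (L \<noteq> [] \<or> hasN s) \<and> (crule_of s \<noteq> rCMC \<longrightarrow> length L \<le> 1) \<and>
          (\<forall>(a',b')\<in>set L. Cond a' b' \<in># \<Gamma> \<and> valid s {#a#} {#a'#} \<and> valid s {#a'#} {#a#} \<and>
            (crule_of s = rCE \<longrightarrow> valid s {#b#} {#b'#})) \<and> valid s (mset (map snd L)) {#b#}"
            unfolding Vc_def by simp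
          then show ?thesis using that by blast
        qed
        have DD: "{#Cond a b#} \<subseteq># \<Delta>" using y(1) Cond by simp
        have sC: "\<And>a' b'. Cond a' b' \<in># \<Gamma> \<Longrightarrow> fsz (Cond a' b') \<le> sum_mset (image_mset fsz \<Gamma>)"
          by (rule fsz_le)
        have sDD: "fsz a + fsz b + 1 \<le> sum_mset (image_mset fsz \<Delta>)" using fsz_le[OF y(1)] Cond by simp
        have pa: "gder s {#a#} {#a'#} \<and> gder s {#a'#} {#a#}" if "(a',b') \<in> set L" for a' b'
        proof -
          have q: "Cond a' b' \<in># \<Gamma>" "valid s {#a#} {#a'#}" "valid s {#a'#} {#a#}" using L(3) that by auto
          have "fsz a' + fsz b' + 1 \<le> sum_mset (image_mset fsz \<Gamma>)" using sC[OF q(1)] by simp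
          then have m: "meas {#a#} {#a'#} < meas \<Gamma> \<Delta>" "meas {#a'#} {#a#} < meas \<Gamma> \<Delta>"
            using sDD by (simp_all add: meas_def)
          show ?thesis using IH[OF m(1) q(2)] IH[OF m(2) q(3)] by simp
        qed
        show ?thesis
        proof (cases "L = []")
          case True
          then have hn: "hasN s" and vb: "valid s {#} {#b#}" using L by auto
          have "meas {#} {#b#} < meas \<Gamma> \<Delta>" using sDD by (simp add: meas_def)
          then have "gder s {#} {#b#}" using IH[OF _ vb] by blast
          then have "gder s {#} {#Cond a b#}" using gder.CN[OF hn] by blast
          then show ?thesis using gder_weak[OF _ _ DD] by simp
        next
          case False
          show ?thesis
          proof (cases "crule_of s = rCMC")
            case False
            then have "length L \<le> 1" using L(2) by blast
            then obtain p where "L = [p]" using \<open>L \<noteq> []\<close> by (cases L) auto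
            then obtain a' b' where LL: "L = [(a',b')]" by (cases p) auto
            have q: "Cond a' b' \<in># \<Gamma>" "valid s {#b'#} {#b#}" "crule_of s = rCE \<longrightarrow> valid s {#b#} {#b'#}"
              using L(3,4) LL by auto
            have pa': "gder s {#a#} {#a'#}" "gder s {#a'#} {#a#}" using pa LL by auto
            have "fsz a' + fsz b' + 1 \<le> sum_mset (image_mset fsz \<Gamma>)" using sC[OF q(1)] by simp
            then have m: "meas {#b'#} {#b#} < meas \<Gamma> \<Delta>" "meas {#b#} {#b'#} < meas \<Gamma> \<Delta>"
              using sDD by (simp_all add: meas_def)
            have gb: "gder s {#b'#} {#b#}" using IH[OF m(1) q(2)] .
            have "gder s {#Cond a' b'#} {#Cond a b#}"
            proof (cases "crule_of s")
              case rCE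
              then have "gder s {#b#} {#b'#}" using IH[OF m(2)] q(3) by blast
              then show ?thesis using gder.CE[OF rCE pa' _ gb] by blast
            next
              case rCM
              then show ?thesis using gder.CM[OF rCM pa' gb] by blast
            next
              case rCMC then show ?thesis using False by simp
            qed
            moreover have "{#Cond a' b'#} \<subseteq># \<Gamma>" using q(1) by simp
            ultimately show ?thesis using gder_weak[OF _ _ DD] by blast
          next
            case True
            define L' where "L' = remdups L"
            have sL: "set L' = set L" and dL: "distinct L'" and neL: "L' \<noteq> []"
              unfolding L'_def using \<open>L \<noteq> []\<close> by auto
            define C where "C = map (\<lambda>(x,y). Cond x y) L'"
            have dC: "distinct C" unfolding C_def using dL
              by (simp add: distinct_map inj_on_def split: prod.splits)
            have sC2: "set C \<subseteq> set_mset \<Gamma>" unfolding C_def using sL L(3) by auto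
            have CG: "mset C \<subseteq># \<Gamma>" using distinct_mset_sub[OF dC sC2] .
            have p1: "\<forall>i<length (map fst L'). gder s {#a#} {#map fst L' ! i#} \<and> gder s {#map fst L' ! i#} {#a#}"
            proof (intro allI impI)
              fix i assume i: "i < length (map fst L')"
              obtain a' b' where e: "L' ! i = (a',b')" by fastforce
              have "(a',b') \<in> set L" using i e sL by (metis length_map nth_mem)
              then show "gder s {#a#} {#map fst L' ! i#} \<and> gder s {#map fst L' ! i#} {#a#}"
                using pa i e by simp
            qed
            have vb: "valid s (mset (map snd L')) {#b#}"
              using L(4) valid_set[of "map snd L'" "map snd L"] sL by simp
            have "sum_list (map fsz (map snd L')) \<le> sum_list (map fsz C)"
              unfolding C_def by (induction L') auto
            also have "\<dots> = sum_mset (image_mset fsz (mset C))" by (metis mset_map sum_mset_sum_list)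
            also have "\<dots> \<le> sum_mset (image_mset fsz \<Gamma>)" using sum_fsz_mono[OF CG] .
            finally have "meas (mset (map snd L')) {#b#} < meas \<Gamma> \<Delta>"
              using sDD by (simp add: meas_def sm_list)
            then have gb: "gder s (mset (map snd L')) {#b#}" using IH[OF _ vb] by blast
            have "gder s (mset (map2 Cond (map fst L') (map snd L'))) {#Cond a b#}"
              apply (rule gder.CMC[OF True])
              using neL p1 gb by (auto simp: Suc_le_eq)
            then have "gder s (mset C) {#Cond a b#}" unfolding C_def map2_Cond .
            then show ?thesis using gder_weak[OF _ CG DD] by blast
          qed
        qed
      qed
    qed
  qed
qed



fun lv :: "'a form \<Rightarrow> 'a form set" where
  "lv (Atom p) = {Atom p}" | "lv Bot = {}"
| "lv (And a b) = lv a \<union> lv b" | "lv (Or a b) = lv a \<union> lv b" | "lv (Imp a b) = lv a \<union> lv b"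
| "lv (Cond a b) = {Cond a b}"

fun absf :: "('a form \<Rightarrow> nat) \<Rightarrow> 'a form \<Rightarrow> nat form" where
  "absf g (Atom p) = Atom (g (Atom p))" | "absf g Bot = Bot"
| "absf g (And a b) = And (absf g a) (absf g b)"
| "absf g (Or a b) = Or (absf g a) (absf g b)"
| "absf g (Imp a b) = Imp (absf g a) (absf g b)"
| "absf g (Cond a b) = Atom (g (Cond a b))"

lemma finite_lv: "finite (lv \<phi>)" by (induction \<phi>) auto

lemma subst_absf: "inj_on g A \<Longrightarrow> lv \<phi> \<subseteq> A \<Longrightarrow> subst (inv_into A g) (absf g \<phi>) = \<phi>"
  by (induction \<phi>) auto

lemma cf_absf: "cond_free (absf g \<phi>)" by (induction \<phi>) auto

lemma peval_absf: "peval v (absf g \<phi>) = bval (\<lambda>x. v (g x)) \<phi>" by (induction \<phi>) auto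

lemma taut_lemma: "(\<forall>V. bval V \<phi>) \<Longrightarrow> taut_inst \<phi>"
proof -
  assume h: "\<forall>V. bval V \<phi>"
  obtain g :: "'a form \<Rightarrow> nat" and n where "inj_on g (lv \<phi>)"
    using finite_imp_inj_to_nat_seg[OF finite_lv] by blast
  then have "subst (inv_into (lv \<phi>) g) (absf g \<phi>) = \<phi>" using subst_absf by blast
  moreover have "ptaut (absf g \<phi>)" unfolding ptaut_def using cf_absf h by (simp add: peval_absf)
  ultimately show ?thesis unfolding taut_inst_def by metis
qed

lemma tc: "(\<forall>h\<in>set hs. thm_in s h) \<Longrightarrow> (\<forall>V. (\<forall>h\<in>set hs. bval V h) \<longrightarrow> bval V \<phi>) \<Longrightarrow> thm_in s \<phi>"
proof (induction hs arbitrary: \<phi>)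
  case Nil
  then show ?case using taut_lemma thm_in.taut by auto
next
  case (Cons h hs)
  have "thm_in s (Imp h \<phi>)" using Cons by auto
  then show ?case using Cons(2) thm_in.mp by auto
qed

lemma bval_Top[simp]: "bval V Top" by (simp add: Top_def)
lemma bval_Iff[simp]: "bval V (Iff a b) = (bval V a \<longleftrightarrow> bval V b)" by (auto simp: Iff_def)

fun conjL :: "'a form list \<Rightarrow> 'a form" where
  "conjL [] = Top" | "conjL (x#xs) = And x (conjL xs)"
fun disjL :: "'a form list \<Rightarrow> 'a form" where
  "disjL [] = Bot" | "disjL (x#xs) = Or x (disjL xs)"

lemma bval_conjL[simp]: "bval V (conjL xs) = (\<forall>x\<in>set xs. bval V x)" by (induction xs) auto
lemma bval_disjL[simp]: "bval V (disjL xs) = (\<exists>x\<in>set xs. bval V x)" by (induction xs) auto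

definition SV :: "('a form \<Rightarrow> bool) \<Rightarrow> 'a form multiset \<Rightarrow> 'a form multiset \<Rightarrow> bool" where
  "SV V \<Gamma> \<Delta> \<longleftrightarrow> ((\<forall>x\<in>#\<Gamma>. bval V x) \<longrightarrow> (\<exists>y\<in>#\<Delta>. bval V y))"

definition PP :: "sys \<Rightarrow> 'a form multiset \<Rightarrow> 'a form multiset \<Rightarrow> bool" where
  "PP s \<Gamma> \<Delta> \<longleftrightarrow> (\<exists>h. thm_in s h \<and> (\<forall>V. bval V h = SV V \<Gamma> \<Delta>))"

lemma PP_intro: "(\<forall>h\<in>set hs. thm_in s h) \<Longrightarrow> (\<forall>V. (\<forall>h\<in>set hs. bval V h) \<longrightarrow> SV V \<Gamma> \<Delta>) \<Longrightarrow> PP s \<Gamma> \<Delta>"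
proof -
  assume a: "\<forall>h\<in>set hs. thm_in s h" and b: "\<forall>V. (\<forall>h\<in>set hs. bval V h) \<longrightarrow> SV V \<Gamma> \<Delta>"
  obtain xs ys where xs: "mset xs = \<Gamma>" and ys: "mset ys = \<Delta>" by (metis ex_mset)
  have e: "bval V (Imp (conjL xs) (disjL ys)) = SV V \<Gamma> \<Delta>" for V
    unfolding SV_def using xs ys by auto
  have "thm_in s (Imp (conjL xs) (disjL ys))" using tc[OF a] b e by simp
  then show ?thesis unfolding PP_def using e by blast
qed

lemma PP_elim: "PP s \<Gamma> \<Delta> \<Longrightarrow> (\<And>h. thm_in s h \<Longrightarrow> (\<And>V. bval V h = SV V \<Gamma> \<Delta>) \<Longrightarrow> thesis) \<Longrightarrow> thesis"
  unfolding PP_def by blast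



lemma crM: "crule_of s = rCM \<Longrightarrow> hasM s" by (cases s) auto
lemma crMC: "crule_of s = rCMC \<Longrightarrow> hasM s \<and> hasC s" by (cases s) auto
lemma hasM_cr: "hasM s \<Longrightarrow> crule_of s = rCM \<or> crule_of s = rCMC" by (cases s) auto
lemma hasC_cr: "hasC s \<Longrightarrow> crule_of s = rCMC" by (cases s) auto

fun conj1 :: "'a form list \<Rightarrow> 'a form" where
  "conj1 [] = Top" | "conj1 [x] = x" | "conj1 (x#y#xs) = And x (conj1 (y#xs))"

lemma bval_conj1: "xs \<noteq> [] \<Longrightarrow> bval V (conj1 xs) = (\<forall>x\<in>set xs. bval V x)"
  by (induction xs rule: conj1.induct) auto

lemma cc_chain: "hasC s \<Longrightarrow> xs \<noteq> [] \<Longrightarrow> thm_in s (Imp (conjL (map (Cond \<phi>) xs)) (Cond \<phi> (conj1 xs)))"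
proof (induction xs rule: conj1.induct)
  case 1 then show ?case by simp
next
  case (2 x)
  show ?case by (rule tc[of "[]"]) auto
next
  case (3 x y xs)
  have a: "thm_in s (Imp (conjL (map (Cond \<phi>) (y#xs))) (Cond \<phi> (conj1 (y#xs))))" using 3 by simp
  have b: "thm_in s (Imp (And (Cond \<phi> x) (Cond \<phi> (conj1 (y#xs)))) (Cond \<phi> (And x (conj1 (y#xs)))))"
    using thm_in.axCC 3 by blast
  show ?case by (rule tc[of "[Imp (conjL (map (Cond \<phi>) (y#xs))) (Cond \<phi> (conj1 (y#xs))),
     Imp (And (Cond \<phi> x) (Cond \<phi> (conj1 (y#xs)))) (Cond \<phi> (And x (conj1 (y#xs))))]"])
     (use a b in auto)
qed

lemma PP_mono1: "PP s A B \<Longrightarrow> (\<forall>V. SV V A B \<longrightarrow> SV V C D) \<Longrightarrow> PP s C D"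
  by (erule PP_elim, rule PP_intro[of "[h]" for h]) auto

lemma PP_mono2: "PP s A B \<Longrightarrow> PP s A' B' \<Longrightarrow> (\<forall>V. SV V A B \<longrightarrow> SV V A' B' \<longrightarrow> SV V C D) \<Longrightarrow> PP s C D"
proof -
  assume a: "PP s A B" "PP s A' B'" and c: "\<forall>V. SV V A B \<longrightarrow> SV V A' B' \<longrightarrow> SV V C D"
  obtain h1 where h1: "thm_in s h1" "\<And>V. bval V h1 = SV V A B" using a(1) unfolding PP_def by blast
  obtain h2 where h2: "thm_in s h2" "\<And>V. bval V h2 = SV V A' B'" using a(2) unfolding PP_def by blast
  show ?thesis by (rule PP_intro[of "[h1,h2]"]) (use h1 h2 c in auto)
qed

lemma PP_thm: "thm_in s h \<Longrightarrow> (\<forall>V. bval V h \<longrightarrow> SV V \<Gamma> \<Delta>) \<Longrightarrow> PP s \<Gamma> \<Delta>"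
  by (rule PP_intro[of "[h]"]) auto

lemma PP_imp: "PP s {#a#} {#b#} \<Longrightarrow> thm_in s (Imp a b)"
proof -
  assume "PP s {#a#} {#b#}"
  then obtain h where h: "thm_in s h" "\<And>V. bval V h = SV V {#a#} {#b#}" unfolding PP_def by blast
  show ?thesis by (rule tc[of "[h]"]) (use h in \<open>auto simp: SV_def\<close>)
qed

lemma PP_iff: "PP s {#a#} {#b#} \<Longrightarrow> PP s {#b#} {#a#} \<Longrightarrow> thm_in s (Iff a b)"
proof -
  assume "PP s {#a#} {#b#}" "PP s {#b#} {#a#}"
  then have h: "thm_in s (Imp a b)" "thm_in s (Imp b a)" using PP_imp by auto
  show ?thesis by (rule tc[of "[Imp a b, Imp b a]"]) (use h in auto)
qed

lemma PP_emp: "PP s {#} {#b#} \<Longrightarrow> thm_in s b"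
proof -
  assume "PP s {#} {#b#}"
  then obtain h where h: "thm_in s h" "\<And>V. bval V h = SV V {#} {#b#}" unfolding PP_def by blast
  show ?thesis by (rule tc[of "[h]"]) (use h in \<open>auto simp: SV_def\<close>)
qed

lemma PP_list: "PP s (mset xs) {#b#} \<Longrightarrow> xs \<noteq> [] \<Longrightarrow> thm_in s (Imp (conj1 xs) b)"
proof -
  assume "PP s (mset xs) {#b#}" "xs \<noteq> []"
  then obtain h where h: "thm_in s h" "\<And>V. bval V h = SV V (mset xs) {#b#}" by (meson PP_elim)
  show ?thesis by (rule tc[of "[h]"]) (use h \<open>xs \<noteq> []\<close> in \<open>auto simp: SV_def bval_conj1\<close>)
qed

lemma tI: "(\<And>V. bval V \<phi>) \<Longrightarrow> thm_in s \<phi>"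
  by (rule tc[of "[]"]) auto

lemma PP_CE: "PP s {#a0#} {#a1#} \<Longrightarrow> PP s {#a1#} {#a0#} \<Longrightarrow> PP s {#b0#} {#b1#} \<Longrightarrow> PP s {#b1#} {#b0#}
  \<Longrightarrow> PP s {#Cond a1 b1#} {#Cond a0 b0#}"
proof -
  assume a: "PP s {#a0#} {#a1#}" "PP s {#a1#} {#a0#}" "PP s {#b0#} {#b1#}" "PP s {#b1#} {#b0#}"
  have "thm_in s (Imp (Cond a1 b1) (Cond a0 b0))"
    using thm_in.RCE[OF PP_iff[OF a(2,1)] PP_iff[OF a(4,3)]] .
  then show ?thesis by (rule PP_thm) (auto simp: SV_def)
qed

lemma PP_CM: "crule_of s = rCM \<Longrightarrow> PP s {#a0#} {#a1#} \<Longrightarrow> PP s {#a1#} {#a0#} \<Longrightarrow> PP s {#b1#} {#b0#}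
  \<Longrightarrow> PP s {#Cond a1 b1#} {#Cond a0 b0#}"
proof -
  assume r: "crule_of s = rCM" and a: "PP s {#a0#} {#a1#}" "PP s {#a1#} {#a0#}" "PP s {#b1#} {#b0#}"
  have i: "thm_in s (Imp b1 b0)" using PP_imp[OF a(3)] .
  have j: "thm_in s (Iff b1 (And b0 b1))" by (rule tc[of "[Imp b1 b0]"]) (use i in auto)
  have t1: "thm_in s (Imp (Cond a1 b1) (Cond a0 (And b0 b1)))"
    using thm_in.RCE[OF PP_iff[OF a(2,1)] j] .
  have t2: "thm_in s (Imp (Cond a0 (And b0 b1)) (And (Cond a0 b0) (Cond a0 b1)))"
    using thm_in.axCM crM[OF r] by blast
  show ?thesis by (rule PP_intro[of "[Imp (Cond a1 b1) (Cond a0 (And b0 b1)),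
        Imp (Cond a0 (And b0 b1)) (And (Cond a0 b0) (Cond a0 b1))]"])
    (use t1 t2 in \<open>auto simp: SV_def\<close>)
qed

lemma PP_CN: "hasN s \<Longrightarrow> PP s {#} {#b#} \<Longrightarrow> PP s {#} {#Cond a b#}"
proof -
  assume n: "hasN s" and p: "PP s {#} {#b#}"
  have tb: "thm_in s b" using PP_emp[OF p] .
  have j: "thm_in s (Iff Top b)" by (rule tc[of "[b]"]) (use tb in auto)
  have t1: "thm_in s (Imp (Cond a Top) (Cond a b))" using thm_in.RCE[OF tI j] by auto
  have t2: "thm_in s (Cond a Top)" using thm_in.axCN[OF n] .
  show ?thesis by (rule PP_intro[of "[Imp (Cond a Top) (Cond a b), Cond a Top]"])
    (use t1 t2 in \<open>auto simp: SV_def\<close>)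
qed



lemma PP_CMC: "crule_of s = rCMC \<Longrightarrow> length \<phi>s = length \<psi>s \<Longrightarrow> 1 \<le> length \<phi>s \<Longrightarrow>
  (\<forall>i<length \<phi>s. PP s {#\<phi>0#} {#\<phi>s!i#} \<and> PP s {#\<phi>s!i#} {#\<phi>0#}) \<Longrightarrow> PP s (mset \<psi>s) {#\<psi>0#} \<Longrightarrow>
  PP s (mset (map2 Cond \<phi>s \<psi>s)) {#Cond \<phi>0 \<psi>0#}"
proof -
  assume r: "crule_of s = rCMC" and len: "length \<phi>s = length \<psi>s" and ge: "1 \<le> length \<phi>s"
    and pa: "\<forall>i<length \<phi>s. PP s {#\<phi>0#} {#\<phi>s!i#} \<and> PP s {#\<phi>s!i#} {#\<phi>0#}"
    and pb: "PP s (mset \<psi>s) {#\<psi>0#}"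
  have hM: "hasM s" and hC: "hasC s" using crMC[OF r] by auto
  have ne: "\<psi>s \<noteq> []" using ge len by auto
  define c where "c = conj1 \<psi>s"
  define H1 where "H1 = map (\<lambda>i. Imp (Cond (\<phi>s!i) (\<psi>s!i)) (Cond \<phi>0 (\<psi>s!i))) [0..<length \<phi>s]"
  have t1: "\<forall>h\<in>set H1. thm_in s h"
  proof
    fix h assume "h \<in> set H1"
    then obtain i where i: "i < length \<phi>s" and h: "h = Imp (Cond (\<phi>s!i) (\<psi>s!i)) (Cond \<phi>0 (\<psi>s!i))"
      unfolding H1_def by auto
    have "thm_in s (Iff (\<phi>s!i) \<phi>0)" using pa i PP_iff by blast
    moreover have "thm_in s (Iff (\<psi>s!i) (\<psi>s!i))" by (rule tI) simp
    ultimately show "thm_in s h" unfolding h by (rule thm_in.RCE)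
  qed
  have t2: "thm_in s (Imp (conjL (map (Cond \<phi>0) \<psi>s)) (Cond \<phi>0 c))"
    unfolding c_def using cc_chain[OF hC ne] .
  have i3: "thm_in s (Imp c \<psi>0)" unfolding c_def using PP_list[OF pb ne] .
  have j: "thm_in s (Iff c (And \<psi>0 c))" by (rule tc[of "[Imp c \<psi>0]"]) (use i3 in auto)
  have t4: "thm_in s (Imp (Cond \<phi>0 c) (Cond \<phi>0 (And \<psi>0 c)))" using thm_in.RCE[OF tI j] by auto
  have t5: "thm_in s (Imp (Cond \<phi>0 (And \<psi>0 c)) (And (Cond \<phi>0 \<psi>0) (Cond \<phi>0 c)))"
    using thm_in.axCM[OF hM] by blast
  show ?thesis
  proof (rule PP_intro[of "H1 @ [Imp (conjL (map (Cond \<phi>0) \<psi>s)) (Cond \<phi>0 c),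
       Imp (Cond \<phi>0 c) (Cond \<phi>0 (And \<psi>0 c)), Imp (Cond \<phi>0 (And \<psi>0 c)) (And (Cond \<phi>0 \<psi>0) (Cond \<phi>0 c))]"])
    show "\<forall>h\<in>set (H1 @ [Imp (conjL (map (Cond \<phi>0) \<psi>s)) (Cond \<phi>0 c),
       Imp (Cond \<phi>0 c) (Cond \<phi>0 (And \<psi>0 c)), Imp (Cond \<phi>0 (And \<psi>0 c)) (And (Cond \<phi>0 \<psi>0) (Cond \<phi>0 c))]).
       thm_in s h" using t1 t2 t4 t5 by auto
    show "\<forall>V. (\<forall>h\<in>set (H1 @ [Imp (conjL (map (Cond \<phi>0) \<psi>s)) (Cond \<phi>0 c),
       Imp (Cond \<phi>0 c) (Cond \<phi>0 (And \<psi>0 c)), Imp (Cond \<phi>0 (And \<psi>0 c)) (And (Cond \<phi>0 \<psi>0) (Cond \<phi>0 c))]).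
       bval V h) \<longrightarrow> SV V (mset (map2 Cond \<phi>s \<psi>s)) {#Cond \<phi>0 \<psi>0#}"
    proof (intro allI impI)
      fix V :: "'a form \<Rightarrow> bool"
      assume hs: "\<forall>h\<in>set (H1 @ [Imp (conjL (map (Cond \<phi>0) \<psi>s)) (Cond \<phi>0 c),
       Imp (Cond \<phi>0 c) (Cond \<phi>0 (And \<psi>0 c)), Imp (Cond \<phi>0 (And \<psi>0 c)) (And (Cond \<phi>0 \<psi>0) (Cond \<phi>0 c))]).
       bval V h"
      have h1: "\<forall>i<length \<phi>s. V (Cond (\<phi>s!i) (\<psi>s!i)) \<longrightarrow> V (Cond \<phi>0 (\<psi>s!i))"
      proof (intro allI impI)
        fix i assume i: "i < length \<phi>s" and v: "V (Cond (\<phi>s!i) (\<psi>s!i))"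
        have "Imp (Cond (\<phi>s!i) (\<psi>s!i)) (Cond \<phi>0 (\<psi>s!i)) \<in> set H1" unfolding H1_def using i by auto
        then show "V (Cond \<phi>0 (\<psi>s!i))" using hs v by fastforce
      qed
      show "SV V (mset (map2 Cond \<phi>s \<psi>s)) {#Cond \<phi>0 \<psi>0#}"
        unfolding SV_def
      proof
        assume all: "\<forall>x\<in>#mset (map2 Cond \<phi>s \<psi>s). bval V x"
        have "\<forall>i<length \<phi>s. V (Cond \<phi>0 (\<psi>s!i))"
          using all h1 map2_nth_mem[OF len] by fastforce
        then have "\<forall>x\<in>set \<psi>s. V (Cond \<phi>0 x)" using len by (metis in_set_conv_nth)
        then have "bval V (conjL (map (Cond \<phi>0) \<psi>s))" by simp
        then show "\<exists>y\<in>#{#Cond \<phi>0 \<psi>0#}. bval V y" using hs by simp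
      qed
    qed
  qed
qed

lemma gder_PP: "gder s \<Gamma> \<Delta> \<Longrightarrow> PP s \<Gamma> \<Delta>"
proof (induction rule: gder.induct)
  case (CMC \<phi>s \<psi>s \<phi>0 \<psi>0)
  then show ?case using PP_CMC[of s \<phi>s \<psi>s \<phi>0 \<psi>0] by blast
next
  case (CE \<phi>0 \<phi>1 \<psi>0 \<psi>1)
  then show ?case using PP_CE by blast
next
  case (CM \<phi>0 \<phi>1 \<psi>1 \<psi>0)
  then show ?case using PP_CM by blast
next
  case (CN \<psi>0 \<phi>0)
  then show ?case using PP_CN by blast
next
  case (ax p \<Gamma> \<Delta>) show ?case by (rule PP_intro[of "[]"]) (auto simp: SV_def)
next
  case (axBot \<Gamma> \<Delta>) show ?case by (rule PP_intro[of "[]"]) (auto simp: SV_def)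
next
  case (LAnd \<phi> \<psi> \<Gamma> \<Delta>) show ?case by (rule PP_mono1[OF LAnd.IH]) (auto simp: SV_def)
next
  case (RAnd \<Gamma> \<phi> \<Delta> \<psi>) show ?case by (rule PP_mono2[OF RAnd.IH]) (auto simp: SV_def)
next
  case (LOr \<phi> \<Gamma> \<Delta> \<psi>) show ?case by (rule PP_mono2[OF LOr.IH]) (auto simp: SV_def)
next
  case (ROr \<Gamma> \<phi> \<psi> \<Delta>) show ?case by (rule PP_mono1[OF ROr.IH]) (auto simp: SV_def)
next
  case (LImp \<Gamma> \<phi> \<Delta> \<psi>) show ?case by (rule PP_mono2[OF LImp.IH]) (auto simp: SV_def)
next
  case (RImp \<phi> \<Gamma> \<psi> \<Delta>) show ?case by (rule PP_mono1[OF RImp.IH]) (auto simp: SV_def)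
next
  case (LW \<Gamma> \<Delta> \<phi>) show ?case by (rule PP_mono1[OF LW.IH]) (auto simp: SV_def)
next
  case (RW \<Gamma> \<Delta> \<phi>) show ?case by (rule PP_mono1[OF RW.IH]) (auto simp: SV_def)
qed



lemma bval_subst: "cond_free \<psi> \<Longrightarrow> bval V (subst \<sigma> \<psi>) = peval (\<lambda>p. bval V (\<sigma> p)) \<psi>"
  by (induction \<psi>) auto

lemma gI1: "(\<forall>V. good s V \<longrightarrow> bval V a \<longrightarrow> bval V b) \<Longrightarrow> gder s {#a#} {#b#}"
  by (rule complete) (auto simp: valid_def)

lemma gI0: "(\<forall>V. good s V \<longrightarrow> bval V b) \<Longrightarrow> gder s {#} {#b#}"
  by (rule complete) (auto simp: valid_def)

lemma gI2: "(\<forall>V. good s V \<longrightarrow> bval V a \<longrightarrow> bval V c \<longrightarrow> bval V b) \<Longrightarrow> gder s (mset [a,c]) {#b#}"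
  by (rule complete) (auto simp: valid_def)

lemma good_CE: "good s V \<Longrightarrow> crule_of s = rCE \<Longrightarrow> gder s {#a0#} {#a1#} \<Longrightarrow> gder s {#a1#} {#a0#}
    \<Longrightarrow> gder s {#b0#} {#b1#} \<Longrightarrow> gder s {#b1#} {#b0#} \<Longrightarrow> V (Cond a1 b1) \<Longrightarrow> V (Cond a0 b0)"
  unfolding good_def by blast
lemma good_CM: "good s V \<Longrightarrow> crule_of s = rCM \<Longrightarrow> gder s {#a0#} {#a1#} \<Longrightarrow> gder s {#a1#} {#a0#}
    \<Longrightarrow> gder s {#b1#} {#b0#} \<Longrightarrow> V (Cond a1 b1) \<Longrightarrow> V (Cond a0 b0)"
  unfolding good_def by blast
lemma good_CMC: "good s V \<Longrightarrow> crule_of s = rCMC \<Longrightarrow> length as = length bs \<Longrightarrow> as \<noteq> [] \<Longrightarrow>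
    (\<forall>i<length as. gder s {#a0#} {#as!i#} \<and> gder s {#as!i#} {#a0#}) \<Longrightarrow>
    gder s (mset bs) {#b0#} \<Longrightarrow> (\<forall>i<length as. V (Cond (as!i) (bs!i))) \<Longrightarrow> V (Cond a0 b0)"
  unfolding good_def by blast
lemma good_N: "good s V \<Longrightarrow> hasN s \<Longrightarrow> gder s {#} {#b#} \<Longrightarrow> V (Cond a b)"
  unfolding good_def by blast

lemma hilb_valid: "thm_in s \<phi> \<Longrightarrow> \<forall>V. good s V \<longrightarrow> bval V \<phi>"
proof (induction rule: thm_in.induct)
  case (taut \<phi>)
  then obtain \<psi> \<sigma> where "ptaut \<psi>" "\<phi> = subst \<sigma> \<psi>" unfolding taut_inst_def by blast
  then show ?case unfolding ptaut_def using bval_subst by auto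
next
  case (mp \<phi> \<psi>) then show ?case by auto
next
  case (RCE \<phi>0 \<phi>1 \<psi>0 \<psi>1)
  have g: "gder s {#\<phi>0#} {#\<phi>1#}" "gder s {#\<phi>1#} {#\<phi>0#}" "gder s {#\<psi>0#} {#\<psi>1#}" "gder s {#\<psi>1#} {#\<psi>0#}"
    using RCE.IH by (auto intro!: gI1)
  show ?case
  proof (intro allI impI)
    fix V :: "'a form \<Rightarrow> bool" assume gV: "good s V"
    have "V (Cond \<phi>0 \<psi>0) \<longrightarrow> V (Cond \<phi>1 \<psi>1)"
    proof (cases "crule_of s")
      case rCE then show ?thesis using good_CE[OF gV rCE g(2,1,4,3)] by blast
    next
      case rCM then show ?thesis using good_CM[OF gV rCM g(2,1,3)] by blast
    next
      case rCMC
      have "\<forall>i<length [\<phi>0]. gder s {#\<phi>1#} {#[\<phi>0]!i#} \<and> gder s {#[\<phi>0]!i#} {#\<phi>1#}" using g by simp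
      moreover have "gder s (mset [\<psi>0]) {#\<psi>1#}" using g by simp
      ultimately show ?thesis using good_CMC[OF gV rCMC, of "[\<phi>0]" "[\<psi>0]" \<phi>1 \<psi>1] by simp
    qed
    then show "bval V (Imp (Cond \<phi>0 \<psi>0) (Cond \<phi>1 \<psi>1))" by simp
  qed
next
  case (axCM \<phi> \<psi> \<theta>)
  have g: "gder s {#\<phi>#} {#\<phi>#}" "gder s {#And \<psi> \<theta>#} {#\<psi>#}" "gder s {#And \<psi> \<theta>#} {#\<theta>#}"
    by (auto intro!: gI1)
  show ?case
  proof (intro allI impI)
    fix V :: "'a form \<Rightarrow> bool" assume gV: "good s V"
    have "V (Cond \<phi> (And \<psi> \<theta>)) \<longrightarrow> V (Cond \<phi> \<psi>) \<and> V (Cond \<phi> \<theta>)"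
    proof (cases "crule_of s = rCM")
      case True then show ?thesis using good_CM[OF gV True g(1,1) g(2)] good_CM[OF gV True g(1,1) g(3)] by blast
    next
      case False
      then have r: "crule_of s = rCMC" using hasM_cr[OF axCM] by simp
      have a: "\<forall>i<length [\<phi>]. gder s {#\<phi>#} {#[\<phi>]!i#} \<and> gder s {#[\<phi>]!i#} {#\<phi>#}" using g by simp
      have b: "gder s (mset [And \<psi> \<theta>]) {#\<psi>#}" "gder s (mset [And \<psi> \<theta>]) {#\<theta>#}" using g by simp_all
      note gg = good_CMC[OF gV]
      show ?thesis
      proof
        assume v: "V (Cond \<phi> (And \<psi> \<theta>))"
        have vv: "\<forall>i<length [\<phi>]. V (Cond ([\<phi>]!i) ([And \<psi> \<theta>]!i))" using v by simp
        show "V (Cond \<phi> \<psi>) \<and> V (Cond \<phi> \<theta>)"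
          using gg[OF r _ _ a b(1) vv] gg[OF r _ _ a b(2) vv] by simp
      qed
    qed
    then show "bval V (Imp (Cond \<phi> (And \<psi> \<theta>)) (And (Cond \<phi> \<psi>) (Cond \<phi> \<theta>)))" by simp
  qed
next
  case (axCC \<phi> \<psi> \<theta>)
  have r: "crule_of s = rCMC" using hasC_cr[OF axCC] .
  have g: "gder s {#\<phi>#} {#\<phi>#}" by (auto intro!: gI1)
  have b: "gder s (mset [\<psi>, \<theta>]) {#And \<psi> \<theta>#}" by (rule gI2) auto
  show ?case
  proof (intro allI impI)
    fix V :: "'a form \<Rightarrow> bool" assume gV: "good s V"
    note gg = good_CMC[OF gV]
    have a: "\<forall>i<length [\<phi>,\<phi>]. gder s {#\<phi>#} {#[\<phi>,\<phi>]!i#} \<and> gder s {#[\<phi>,\<phi>]!i#} {#\<phi>#}"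
      using g by (simp add: less_Suc_eq nth_Cons')
    have "V (Cond \<phi> \<psi>) \<and> V (Cond \<phi> \<theta>) \<longrightarrow> V (Cond \<phi> (And \<psi> \<theta>))"
    proof
      assume v: "V (Cond \<phi> \<psi>) \<and> V (Cond \<phi> \<theta>)"
      have vv: "\<forall>i<length [\<phi>,\<phi>]. V (Cond ([\<phi>,\<phi>]!i) ([\<psi>,\<theta>]!i))" using v by (simp add: less_Suc_eq nth_Cons')
      show "V (Cond \<phi> (And \<psi> \<theta>))" using gg[OF r _ _ a b vv] by simp
    qed
    then show "bval V (Imp (And (Cond \<phi> \<psi>) (Cond \<phi> \<theta>)) (Cond \<phi> (And \<psi> \<theta>)))" by simp
  qed
next
  case (axCN \<phi>)
  have "gder s {#} {#Top#}" by (auto intro!: gI0)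
  then show ?case using axCN good_N by auto
qed

theorem mainTheorem3:
  fixes s :: sys and \<phi> :: "'a form"
  shows "gder s {#} {#\<phi>#} \<longleftrightarrow> \<phi> \<in> logic s"
proof
  assume "gder s {#} {#\<phi>#}"
  then have "PP s {#} {#\<phi>#}" by (rule gder_PP)
  then have "thm_in s \<phi>" by (rule PP_emp)
  then show "\<phi> \<in> logic s" unfolding logic_def by simp
next
  assume "\<phi> \<in> logic s"
  then have "thm_in s \<phi>" unfolding logic_def by simp
  then have "\<forall>V. good s V \<longrightarrow> bval V \<phi>" by (rule hilb_valid)
  then show "gder s {#} {#\<phi>#}" by (rule gI0)
qed

end
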